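(* Let $\mathcal{U}$ be a finite-dimensional real Hilbert space, let $\mathcal{W}$ be a real Hilbert space, let $\phi:\mathcal{U}\to\mathcal{B}(\mathcal{U},\mathcal{W})$ be a map with associated kernel $k(v_1,v_2)=\phi(v_1)^*\phi(v_2)\in\mathcal{B}(\mathcal{U})$, let $(u_i,y_i)\in\mathcal{U}\times\mathcal{U}$, $i=1,\dots,n$, be data and let $\gamma>0$. Let $\Phi\in\mathcal{B}(\mathcal{U}^n,\mathcal{W})$ be $\Phi(v_1,\dots,v_n)=\sum_i\phi(u_i)v_i$; for $u\in\mathcal{U}$ let $\kappa(u)=\Phi^*\phi(u)\in\mathcal{B}(\mathcal{U},\mathcal{U}^n)$, i.e. $\kappa(u)v=(k(u_1,u)v,\dots,k(u_n,u)v)$; let $K_i=\kappa(u_i)$; let $K=\Phi^*\Phi\in\mathcal{B}(\mathcal{U}^n)$ be the Gram operator with $(i,j)$ block $k(u_i,u_j)$, and $K^{1/2}$ its self-adjoint nonnegative square root. Let $L(Q)=\sum_{i=1}^n\|\phi(u_i)^*Q\phi(u_i)u_i-y_i\|_{\mathcal{U}}^2$ for $Q\in\mathcal{B}(\mathcal{W})$. If the problem $\min_{Q\in\mathcal{B}^+(\mathcal{W})}L(Q)+\gamma\|Q\|$ has a solution, then a solution of it is given by $\hat Q=\Phi M\Phi^*$, where $M\in\mathcal{B}^+(\mathcal{U}^n)$ is a solution of $$\min_{M\in\mathcal{B}^+(\mathcal{U}^n)}\ \sum_{i=1}^n\|K_i^*MK_iu_i-y_i\|_{\mathcal{U}}^2+\gamma\|K^{1/2}MK^{1/2}\|.$$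 Moreover, the operator $G:\mathcal{U}\to\mathcal{U}$, $Gu=\phi(u)^*\hat Q\phi(u)u$, corresponding to this solution satisfies $Gu=\kappa(u)^*M\kappa(u)u$ for all $u\in\mathcal{U}$.
   Context: $\mathcal{U}^n$ is the $n$-fold Cartesian product with inner product $\sum_i\langle u_i,v_i\rangle_{\mathcal{U}}$. $\mathcal{B}(\mathcal{X},\mathcal{Y})$ denotes bounded linear operators, $\mathcal{B}(\mathcal{X})=\mathcal{B}(\mathcal{X},\mathcal{X})$, $^*$ is the adjoint, $\|\cdot\|$ the operator norm. An operator $G$ on a Hilbert space $\mathcal{H}$ is nonnegative if $\langle Gu,u\rangle_{\mathcal{H}}\ge0$ for all $u$ (self-adjointness not required); $\mathcal{B}^+(\mathcal{H})$ is the set of nonnegative operators in $\mathcal{B}(\mathcal{H})$. *)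

theory Defs
  imports "HOL-Analysis.Analysis"
begin

text \<open>Nonnegative operator: \<langle>G x, x\<rangle> \<ge> 0 for all x (self-adjointness not required).\<close>
definition nonneg_op :: "('a::real_inner \<Rightarrow>\<^sub>L 'a) \<Rightarrow> bool" where
  "nonneg_op G \<longleftrightarrow> (\<forall>x. 0 \<le> inner (blinfun_apply G x) x)"

definition badj :: "('a::real_inner \<Rightarrow>\<^sub>L 'b::real_inner) \<Rightarrow> ('b \<Rightarrow>\<^sub>L 'a)" where
  "badj f = Blinfun (adjoint (blinfun_apply f))"

definition op_sqrt :: "('a::real_inner \<Rightarrow>\<^sub>L 'a) \<Rightarrow> ('a \<Rightarrow>\<^sub>L 'a)" where
  "op_sqrt A = (THE S. badj S = S \<and> nonneg_op S \<and> S o\<^sub>L S = A)"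

text \<open>U^n is modelled as the vector type 'u ^ 'n (inner product = sum of componentwise inner products).
  Phi(v_1,...,v_n) = sum_i phi(u_i) v_i.\<close>
definition Phi_op :: "('u::real_inner \<Rightarrow> ('u \<Rightarrow>\<^sub>L 'w::real_inner)) \<Rightarrow> ('n::finite \<Rightarrow> 'u)
    \<Rightarrow> (('u ^ 'n) \<Rightarrow>\<^sub>L 'w)" where
  "Phi_op phi u = Blinfun (\<lambda>v. \<Sum>i\<in>UNIV. blinfun_apply (phi (u i)) (v $ i))"

definition kappa_op :: "('u::real_inner \<Rightarrow> ('u \<Rightarrow>\<^sub>L 'w::real_inner)) \<Rightarrow> ('n::finite \<Rightarrow> 'u)
    \<Rightarrow> 'u \<Rightarrow> ('u \<Rightarrow>\<^sub>L ('u ^ 'n))" where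
  "kappa_op phi u x = badj (Phi_op phi u) o\<^sub>L phi x"

definition Gram_op :: "('u::real_inner \<Rightarrow> ('u \<Rightarrow>\<^sub>L 'w::real_inner)) \<Rightarrow> ('n::finite \<Rightarrow> 'u)
    \<Rightarrow> (('u ^ 'n) \<Rightarrow>\<^sub>L ('u ^ 'n))" where
  "Gram_op phi u = badj (Phi_op phi u) o\<^sub>L Phi_op phi u"

definition objQ :: "('u::real_inner \<Rightarrow> ('u \<Rightarrow>\<^sub>L 'w::real_inner)) \<Rightarrow> ('n::finite \<Rightarrow> 'u)
    \<Rightarrow> ('n \<Rightarrow> 'u) \<Rightarrow> real \<Rightarrow> ('w \<Rightarrow>\<^sub>L 'w) \<Rightarrow> real" where
  "objQ phi u y \<gamma> Q =
     (\<Sum>i\<in>UNIV. (norm (blinfun_apply (badj (phi (u i)) o\<^sub>L Q o\<^sub>L phi (u i)) (u i) - y i))\<^sup>2)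
     + \<gamma> * norm Q"

definition objM :: "('u::real_inner \<Rightarrow> ('u \<Rightarrow>\<^sub>L 'w::real_inner)) \<Rightarrow> ('n::finite \<Rightarrow> 'u)
    \<Rightarrow> ('n \<Rightarrow> 'u) \<Rightarrow> real \<Rightarrow> (('u ^ 'n) \<Rightarrow>\<^sub>L ('u ^ 'n)) \<Rightarrow> real" where
  "objM phi u y \<gamma> M =
     (\<Sum>i\<in>UNIV. (norm (blinfun_apply
          (badj (kappa_op phi u (u i)) o\<^sub>L M o\<^sub>L kappa_op phi u (u i)) (u i) - y i))\<^sup>2)
     + \<gamma> * norm (op_sqrt (Gram_op phi u) o\<^sub>L M o\<^sub>L op_sqrt (Gram_op phi u))"

definition is_nonneg_minimizer :: "(('a::real_inner \<Rightarrow>\<^sub>L 'a) \<Rightarrow> real) \<Rightarrow> ('a \<Rightarrow>\<^sub>L 'a) \<Rightarrow> bool" where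
  "is_nonneg_minimizer f X \<longleftrightarrow> nonneg_op X \<and> (\<forall>Y. nonneg_op Y \<longrightarrow> f X \<le> f Y)"

end

theory Submission
  imports Defs
begin


lemma badj_apply:
  fixes f :: "'a::euclidean_space \<Rightarrow>\<^sub>L 'b::real_inner"
  shows "blinfun_apply (badj f) = (\<lambda>y. \<Sum>i\<in>Basis. (blinfun_apply f i \<bullet> y) *\<^sub>R i)"
proof -
  have "adjoint (blinfun_apply f) = (\<lambda>y. \<Sum>i\<in>Basis. (blinfun_apply f i \<bullet> y) *\<^sub>R i)"
  proof (rule adjoint_unique, intro allI)
    fix x y
    have "blinfun_apply f x \<bullet> y = blinfun_apply f (\<Sum>i\<in>Basis. (x \<bullet> i) *\<^sub>R i) \<bullet> y"
      by (simp add: euclidean_representation)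
    also have "\<dots> = (\<Sum>i\<in>Basis. (x \<bullet> i) *\<^sub>R blinfun_apply f i) \<bullet> y"
      by (simp add: blinfun.sum_right blinfun.scaleR_right)
    finally show "blinfun_apply f x \<bullet> y = x \<bullet> (\<Sum>i\<in>Basis. (blinfun_apply f i \<bullet> y) *\<^sub>R i)"
      by (simp add: inner_sum_left inner_sum_right mult.commute)
  qed
  moreover have "bounded_linear (\<lambda>y. \<Sum>i\<in>Basis. (blinfun_apply f i \<bullet> y) *\<^sub>R (i::'a))"
    by (intro bounded_linear_sum bounded_linear_scaleR_left[THEN bounded_linear_compose]
        bounded_linear_inner_right)
  ultimately show ?thesis unfolding badj_def by (simp add: bounded_linear_Blinfun_apply)
qed

lemma badj_inner:
  fixes f :: "'a::euclidean_space \<Rightarrow>\<^sub>L 'b::real_inner"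
  shows "blinfun_apply f x \<bullet> y = x \<bullet> blinfun_apply (badj f) y"
proof -
  have "blinfun_apply f x \<bullet> y = blinfun_apply f (\<Sum>i\<in>Basis. (x \<bullet> i) *\<^sub>R i) \<bullet> y"
    by (simp add: euclidean_representation)
  also have "\<dots> = (\<Sum>i\<in>Basis. (x \<bullet> i) *\<^sub>R blinfun_apply f i) \<bullet> y"
    by (simp add: blinfun.sum_right blinfun.scaleR_right)
  finally show ?thesis
    by (simp add: badj_apply inner_sum_left inner_sum_right mult.commute)
qed

lemma badj_inner':
  fixes f :: "'a::euclidean_space \<Rightarrow>\<^sub>L 'b::real_inner"
  shows "y \<bullet> blinfun_apply f x = blinfun_apply (badj f) y \<bullet> x"
  using badj_inner[of f x y] by (simp add: inner_commute)

lemma badj_eqI: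
  fixes f :: "'a::euclidean_space \<Rightarrow>\<^sub>L 'b::real_inner"
  assumes "\<And>x y. blinfun_apply f x \<bullet> y = x \<bullet> blinfun_apply g y"
  shows "badj f = g"
proof (rule blinfun_eqI)
  fix y
  have "\<forall>x. x \<bullet> blinfun_apply (badj f) y = x \<bullet> blinfun_apply g y"
    using assms badj_inner by metis
  then show "blinfun_apply (badj f) y = blinfun_apply g y" using vector_eq_ldot by blast
qed

lemma quad_zero:
  fixes a b :: real
  assumes "\<And>t. a * t + b * t^2 \<le> 0"
  shows "a = 0"
proof (rule ccontr)
  assume "a \<noteq> 0"
  define t where "t = a / (\<bar>b\<bar> + 1)"
  have pos: "\<bar>b\<bar> + 1 > 0" by simp
  have "a * t + b * t^2 = a^2 * (\<bar>b\<bar> + 1 + b) / (\<bar>b\<bar> + 1)^2"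
  proof -
    have "\<And>c. c > 0 \<Longrightarrow> a * (a / c) + b * (a/c)^2 = a^2 * (c + b) / c^2"
      by (simp add: field_simps power2_eq_square)
    from this[OF pos] show ?thesis unfolding t_def by (simp add: add.commute)
  qed
  moreover have "a^2 * (\<bar>b\<bar> + 1 + b) / (\<bar>b\<bar> + 1)^2 > 0"
    using \<open>a \<noteq> 0\<close> pos by (intro divide_pos_pos mult_pos_pos) auto
  ultimately show False using assms[of t] by linarith
qed



lemma eig_exists:
  fixes A :: "'a::euclidean_space \<Rightarrow> 'a"
  assumes lin: "linear A" and sa: "\<And>x y. A x \<bullet> y = x \<bullet> A y"
    and W: "subspace W" "A ` W \<subseteq> W" "W \<noteq> {0}"
  shows "\<exists>e\<in>W. norm e = 1 \<and> A e = (A e \<bullet> e) *\<^sub>R e"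
proof -
  interpret linear A by fact
  define T where "T = sphere (0::'a) 1 \<inter> W"
  have cT: "compact T" unfolding T_def
    by (intro compact_Int_closed compact_sphere closed_subspace W(1))
  obtain x0 where x0: "x0 \<in> W" "x0 \<noteq> 0" using W(1,3) subspace_0 by blast
  have "x0 /\<^sub>R norm x0 \<in> T" unfolding T_def using x0 W(1)
    by (auto simp: subspace_scale)
  hence neT: "T \<noteq> {}" by blast
  have cont: "continuous_on T (\<lambda>x. A x \<bullet> x)"
    using lin[unfolded linear_conv_bounded_linear]
    by (intro continuous_intros linear_continuous_on)
  obtain e where eT: "e \<in> T" and emax: "\<And>x. x \<in> T \<Longrightarrow> A x \<bullet> x \<le> A e \<bullet> e"
    using continuous_attains_sup[OF cT neT cont] by blast
  define l where "l = A e \<bullet> e"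
  have eW: "e \<in> W" and en: "norm e = 1" using eT by (auto simp: T_def)
  have ee: "e \<bullet> e = 1" using en by (simp add: norm_eq_1)
  have bound: "A x \<bullet> x \<le> l * (x \<bullet> x)" if "x \<in> W" for x
  proof (cases "x = 0")
    case True then show ?thesis by (simp add: zero)
  next
    case False
    have "x /\<^sub>R norm x \<in> T" unfolding T_def using that False W(1)
      by (auto simp: subspace_scale)
    from emax[OF this] have "A (x /\<^sub>R norm x) \<bullet> (x /\<^sub>R norm x) \<le> l" by (simp add: l_def)
    hence "(A x \<bullet> x) / (norm x)^2 \<le> l"
      by (simp add: scale power2_eq_square divide_inverse mult_ac)
    moreover have "(norm x)^2 = x \<bullet> x" by (simp add: power2_norm_eq_inner)
    ultimately show ?thesis using False by (simp add: divide_le_eq mult.commute)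
  qed
  have orth: "(A e - l *\<^sub>R e) \<bullet> y = 0" if yW: "y \<in> W" for y
  proof -
    have "(2 * (A e \<bullet> y) - 2 * l * (e \<bullet> y)) * t + (A y \<bullet> y - l * (y \<bullet> y)) * t^2 \<le> 0" for t
    proof -
      have "e + t *\<^sub>R y \<in> W" using W(1) eW yW by (simp add: subspace_add subspace_scale)
      from bound[OF this] have "A (e + t *\<^sub>R y) \<bullet> (e + t *\<^sub>R y) \<le> l * ((e + t *\<^sub>R y) \<bullet> (e + t *\<^sub>R y))" .
      moreover have "A y \<bullet> e = A e \<bullet> y" using sa[of y e] by (simp add: inner_commute)
      ultimately show ?thesis
        by (simp add: add scale inner_add_left inner_add_right ee l_def[symmetric] inner_commute[of y e]
            algebra_simps power2_eq_square)
    qed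
    from quad_zero[OF this] show ?thesis by (simp add: inner_diff_left algebra_simps)
  qed
  have "A e - l *\<^sub>R e \<in> W" using W eW by (simp add: subspace_diff subspace_scale image_subset_iff)
  from orth[OF this] have "A e = l *\<^sub>R e" by simp
  thus ?thesis using eW en l_def by blast
qed

lemma spectral_sub:
  fixes A :: "'a::euclidean_space \<Rightarrow> 'a"
  assumes lin: "linear A" and sa: "\<And>x y. A x \<bullet> y = x \<bullet> A y"
  shows "subspace W \<Longrightarrow> A ` W \<subseteq> W \<Longrightarrow> \<exists>B. finite B \<and> B \<subseteq> W \<and>
     (\<forall>b\<in>B. norm b = 1 \<and> A b = (A b \<bullet> b) *\<^sub>R b) \<and> pairwise orthogonal B \<and>
     (\<forall>x\<in>W. x = (\<Sum>b\<in>B. (x \<bullet> b) *\<^sub>R b))"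
proof (induction "dim W" arbitrary: W rule: less_induct)
  case less
  show ?case
  proof (cases "W = {0}")
    case True
    then show ?thesis by (intro exI[of _ "{}"]) auto
  next
    case False
    obtain e where eW: "e \<in> W" and en: "norm e = 1" and eA: "A e = (A e \<bullet> e) *\<^sub>R e"
      using eig_exists[OF lin sa less(2,3) False] by blast
    have ee: "e \<bullet> e = 1" using en by (simp add: norm_eq_1)
    define W' where "W' = W \<inter> {y. orthogonal e y}"
    have sW': "subspace W'" unfolding W'_def
      using less(2) subspace_orthogonal_to_vector[of e]
      by (auto simp: subspace_def)
    have AW': "A ` W' \<subseteq> W'"
    proof
      fix z assume "z \<in> A ` W'"
      then obtain x where x: "x \<in> W'" "z = A x" by blast
      have "e \<bullet> A x = A e \<bullet> x" using sa[of e x] by simp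
      also have "\<dots> = 0" using x(1) by (subst eA) (simp add: W'_def orthogonal_def)
      finally show "z \<in> W'" using x less(3) by (auto simp: W'_def orthogonal_def)
    qed
    have "e \<notin> W'" using ee by (auto simp: W'_def orthogonal_def)
    hence "W' \<subset> W" using eW by (auto simp: W'_def)
    hence "dim W' < dim W"
    proof -
      have "span W' = W'" using sW' by (metis span_eq_iff)
      moreover have "span W = W" using less(2) by (metis span_eq_iff)
      ultimately have "span W' \<subset> span W" using \<open>W' \<subset> W\<close> by (simp only:)
      then show ?thesis by (rule dim_psubset)
    qed
    from less(1)[OF this sW' AW'] obtain B' where B': "finite B'" "B' \<subseteq> W'"
      "\<forall>b\<in>B'. norm b = 1 \<and> A b = (A b \<bullet> b) *\<^sub>R b" "pairwise orthogonal B'"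
      "\<forall>x\<in>W'. x = (\<Sum>b\<in>B'. (x \<bullet> b) *\<^sub>R b)" by blast
    have eB': "e \<notin> B'" using B'(2) ee by (auto simp: W'_def orthogonal_def)
    have orthe: "e \<bullet> b = 0" if "b \<in> B'" for b using that B'(2) by (auto simp: W'_def orthogonal_def)
    have r: "x = (\<Sum>b\<in>insert e B'. (x \<bullet> b) *\<^sub>R b)" if xW: "x \<in> W" for x
    proof -
      define x' where "x' = x - (x \<bullet> e) *\<^sub>R e"
      have "x' \<in> W'" unfolding x'_def W'_def orthogonal_def using xW eW less(2) ee
        by (auto simp: subspace_diff subspace_scale inner_diff_right inner_commute)
      hence "x' = (\<Sum>b\<in>B'. (x' \<bullet> b) *\<^sub>R b)" using B'(5) by blast
      also have "\<dots> = (\<Sum>b\<in>B'. (x \<bullet> b) *\<^sub>R b)"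
        by (intro sum.cong refl) (simp add: x'_def inner_diff_left orthe)
      finally show "x = (\<Sum>b\<in>insert e B'. (x \<bullet> b) *\<^sub>R b)"
        using B'(1) eB' by (simp add: x'_def algebra_simps)
    qed
    have "finite (insert e B')" using B'(1) by simp
    moreover have "insert e B' \<subseteq> W" using eW B'(2) W'_def by auto
    moreover have "pairwise orthogonal (insert e B')"
        using B'(4) orthe by (auto simp: pairwise_insert orthogonal_def inner_commute)
    moreover have "\<forall>b\<in>insert e B'. norm b = 1 \<and> A b = (A b \<bullet> b) *\<^sub>R b" using en eA B'(3) by auto
    ultimately show ?thesis using r by blast
  qed
qed



definition onb :: "'a::real_inner set \<Rightarrow> bool" where
  "onb B \<longleftrightarrow> finite B \<and> (\<forall>b\<in>B. norm b = 1) \<and> pairwise orthogonal B \<and>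
     (\<forall>x. x = (\<Sum>b\<in>B. (x \<bullet> b) *\<^sub>R b))"

definition fc :: "'a::real_inner set \<Rightarrow> ('a \<Rightarrow> real) \<Rightarrow> 'a \<Rightarrow> 'a" where
  "fc B g x = (\<Sum>b\<in>B. (g b * (x \<bullet> b)) *\<^sub>R b)"

lemma onb_ext:
  assumes "onb B" "\<And>b. b \<in> B \<Longrightarrow> x \<bullet> b = y \<bullet> b"
  shows "x = y"
proof -
  have "x = (\<Sum>b\<in>B. (x \<bullet> b) *\<^sub>R b)" "y = (\<Sum>b\<in>B. (y \<bullet> b) *\<^sub>R b)"
    using assms(1) unfolding onb_def by blast+
  then show ?thesis using assms(2) by (metis (no_types, lifting) sum.cong)
qed

lemma onb_inner:
  assumes "onb B" "b \<in> B" "c \<in> B"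
  shows "b \<bullet> c = (if b = c then 1 else 0)"
  using assms unfolding onb_def pairwise_def orthogonal_def
  by (auto simp: norm_eq_1)

lemma fc_inner_basis:
  assumes "onb B" "c \<in> B"
  shows "fc B g x \<bullet> c = g c * (x \<bullet> c)"
proof -
  have fin: "finite B" using assms(1) by (simp add: onb_def)
  have "fc B g x \<bullet> c = (\<Sum>b\<in>B. g b * (x \<bullet> b) * (b \<bullet> c))"
    by (simp add: fc_def inner_sum_left)
  also have "\<dots> = (\<Sum>b\<in>B. if b = c then g b * (x \<bullet> b) else 0)"
    by (intro sum.cong refl) (simp add: onb_inner[OF assms(1) _ assms(2)])
  also have "\<dots> = g c * (x \<bullet> c)" using fin assms(2) by simp
  finally show ?thesis .
qed

lemma fc_comp:
  assumes "onb B"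
  shows "fc B g (fc B h x) = fc B (\<lambda>b. g b * h b) x"
  by (rule onb_ext[OF assms]) (simp add: fc_inner_basis[OF assms])

lemma fc_cong:
  assumes "onb B" "\<And>b. b \<in> B \<Longrightarrow> g b = h b"
  shows "fc B g x = fc B h x"
  by (rule onb_ext[OF assms(1)]) (simp add: fc_inner_basis[OF assms(1)] assms(2))

lemma fc_one:
  assumes "onb B"
  shows "fc B (\<lambda>b. 1) x = x"
  by (rule onb_ext[OF assms]) (simp add: fc_inner_basis[OF assms])

lemma fc_zero:
  assumes "onb B"
  shows "fc B (\<lambda>b. 0) x = 0"
  by (rule onb_ext[OF assms]) (simp add: fc_inner_basis[OF assms])

lemma fc_diff:
  assumes "onb B"
  shows "fc B g x - fc B h x = fc B (\<lambda>b. g b - h b) x"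
  by (rule onb_ext[OF assms]) (simp add: fc_inner_basis[OF assms] inner_diff_left algebra_simps)

lemma fc_sym:
  shows "fc B g x \<bullet> y = x \<bullet> fc B g y"
  unfolding fc_def inner_sum_left inner_sum_right
  by (intro sum.cong refl) (simp add: inner_commute[of _ y] mult_ac)

lemma fc_nonneg:
  assumes "\<And>b. b \<in> B \<Longrightarrow> g b \<ge> 0"
  shows "fc B g x \<bullet> x \<ge> 0"
  unfolding fc_def inner_sum_left
proof (intro sum_nonneg)
  fix b assume "b \<in> B"
  then show "0 \<le> (g b * (x \<bullet> b)) *\<^sub>R b \<bullet> x"
    using assms[of b] by (simp add: inner_commute[of b x] mult.assoc)
qed

lemma fc_bl: "bounded_linear (fc B g)"
  unfolding fc_def
proof (rule bounded_linear_sum)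
  fix b
  show "bounded_linear (\<lambda>x. (g b * (x \<bullet> b)) *\<^sub>R b)"
    by (rule bounded_linear_compose[OF bounded_linear_scaleR_left,
          OF bounded_linear_compose[OF bounded_linear_mult_right bounded_linear_inner_left]])
qed

lemma fc_linear_eq:
  assumes "onb B" "linear A" "\<And>x y. A x \<bullet> y = x \<bullet> A y"
    "\<And>b. b \<in> B \<Longrightarrow> A b = (A b \<bullet> b) *\<^sub>R b"
  shows "A x = fc B (\<lambda>b. A b \<bullet> b) x"
proof (rule onb_ext[OF assms(1)])
  fix b assume b: "b \<in> B"
  have "A x \<bullet> b = x \<bullet> A b" by (rule assms(3))
  also have "\<dots> = (A b \<bullet> b) * (x \<bullet> b)" by (subst assms(4)[OF b]) simp
  finally show "A x \<bullet> b = fc B (\<lambda>b. A b \<bullet> b) x \<bullet> b" by (simp add: fc_inner_basis[OF assms(1) b])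
qed

lemma fc_norm_le:
  assumes "onb B" "\<And>b. b \<in> B \<Longrightarrow> g b * g b = g b"
  shows "norm (fc B g x) \<le> norm x"
proof -
  have "norm (fc B g x) ^ 2 = fc B g x \<bullet> fc B g x" by (simp add: power2_norm_eq_inner)
  also have "\<dots> = x \<bullet> fc B g (fc B g x)" by (simp add: fc_sym)
  also have "\<dots> = x \<bullet> fc B g x"
  proof -
    have "fc B g (fc B g x) = fc B g x" unfolding fc_comp[OF assms(1)]
      by (rule fc_cong[OF assms(1)]) (simp add: assms(2))
    then show ?thesis by simp
  qed
  also have "\<dots> \<le> norm x * norm (fc B g x)" by (rule abs_le_D1[OF Cauchy_Schwarz_ineq2])
  finally have "norm (fc B g x) * norm (fc B g x) \<le> norm x * norm (fc B g x)"
    by (simp add: power2_eq_square)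
  then show ?thesis
    by (cases "norm (fc B g x) = 0") (auto simp: mult_le_cancel_right)
qed

lemma psd_zero:
  fixes P :: "'a::real_inner \<Rightarrow> 'a"
  assumes "linear P" "\<And>x y. P x \<bullet> y = x \<bullet> P y" "\<And>x. P x \<bullet> x \<ge> 0" "P c \<bullet> c = 0"
  shows "P c = 0"
proof -
  interpret linear P by fact
  have "(- 2 * (P c \<bullet> y)) * t + (- (P y \<bullet> y)) * t^2 \<le> 0" for y t
  proof -
    have h1: "P (c + t *\<^sub>R y) \<bullet> (c + t *\<^sub>R y) \<ge> 0" by (rule assms(3))
    have h2: "P y \<bullet> c = P c \<bullet> y" using assms(2)[of y c] by (simp add: inner_commute)
    have h3: "P (c + t *\<^sub>R y) \<bullet> (c + t *\<^sub>R y) =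
       P c \<bullet> c + (t * (P y \<bullet> c) + t * (P c \<bullet> y + t * (P y \<bullet> y)))"
      by (simp only: add scale inner_add_left inner_add_right inner_scaleR_left inner_scaleR_right
          add.assoc)
    have h4: "\<And>a b d :: real. 0 + (t * a + t * (a + t * d)) = 2 * a * t + d * t^2"
      by (simp add: algebra_simps power2_eq_square)
    show ?thesis using h1 unfolding h3 h2 assms(4) h4 by linarith
  qed
  from quad_zero[OF this] have "P c \<bullet> y = 0" for y by simp
  from this[of "P c"] show ?thesis by simp
qed



lemma onb_spectral:
  fixes A :: "'a::euclidean_space \<Rightarrow> 'a"
  assumes lin: "linear A" and sa: "\<And>x y. A x \<bullet> y = x \<bullet> A y"
  obtains B where "onb B" "\<And>b. b \<in> B \<Longrightarrow> A b = (A b \<bullet> b) *\<^sub>R b"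
proof -
  from spectral_sub[OF lin sa, of UNIV] obtain B where "finite B"
     "\<forall>b\<in>B. norm b = 1 \<and> A b = (A b \<bullet> b) *\<^sub>R b" "pairwise orthogonal B"
     "\<forall>x. x = (\<Sum>b\<in>B. (x \<bullet> b) *\<^sub>R b)" by auto
  then show ?thesis using that unfolding onb_def by blast
qed

lemma sqrt_unique:
  fixes T S :: "'a::euclidean_space \<Rightarrow>\<^sub>L 'a"
  assumes T: "badj T = T" "nonneg_op T" "T o\<^sub>L T = K"
    and S: "badj S = S" "nonneg_op S" "S o\<^sub>L S = K"
  shows "T = S"
proof -
  have Tsym: "blinfun_apply T x \<bullet> y = x \<bullet> blinfun_apply T y" for x y
    using badj_inner[of T x y] T(1) by simp
  have Ssym: "blinfun_apply S x \<bullet> y = x \<bullet> blinfun_apply S y" for x y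
    using badj_inner[of S x y] S(1) by simp
  have Tpos: "0 \<le> blinfun_apply T x \<bullet> x" for x using T(2) by (simp add: nonneg_op_def)
  have Spos: "0 \<le> blinfun_apply S x \<bullet> x" for x using S(2) by (simp add: nonneg_op_def)
  have TT: "blinfun_apply T (blinfun_apply T x) = blinfun_apply S (blinfun_apply S x)" for x
    using T(3) S(3) by (metis blinfun_apply_blinfun_compose)
  have linT: "linear (blinfun_apply T)" and linS: "linear (blinfun_apply S)"
    by (simp_all add: blinfun.bounded_linear_right bounded_linear.linear)
  define D where "D x = blinfun_apply T x - blinfun_apply S x" for x
  have linD: "linear D" unfolding D_def using linT linS by (rule linear_compose_sub)
  have Dsym: "D x \<bullet> y = x \<bullet> D y" for x y
    by (simp add: D_def inner_diff_left inner_diff_right Tsym Ssym)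
  obtain C where C: "onb C" "\<And>c. c \<in> C \<Longrightarrow> D c = (D c \<bullet> c) *\<^sub>R c"
    using onb_spectral[OF linD Dsym] by blast
  have Dc0: "D c = 0" if c: "c \<in> C" for c
  proof -
    define \<mu> where "\<mu> = D c \<bullet> c"
    have Dc: "D c = \<mu> *\<^sub>R c" using C(2)[OF c] \<mu>_def by simp
    have "blinfun_apply T (D c) + D (blinfun_apply S c) = 0"
      unfolding D_def using TT[of c] by (simp add: blinfun.diff_right)
    hence "blinfun_apply T (D c) \<bullet> c + D (blinfun_apply S c) \<bullet> c = 0"
      by (metis inner_add_left inner_zero_left)
    moreover have "D (blinfun_apply S c) \<bullet> c = \<mu> * (blinfun_apply S c \<bullet> c)"
      by (simp add: Dsym Dc)
    moreover have "blinfun_apply T (D c) \<bullet> c = \<mu> * (blinfun_apply T c \<bullet> c)"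
      by (simp add: Dc blinfun.scaleR_right)
    ultimately have eq: "\<mu> * (blinfun_apply T c \<bullet> c + blinfun_apply S c \<bullet> c) = 0"
      by (simp add: algebra_simps)
    show ?thesis
    proof (cases "\<mu> = 0")
      case True then show ?thesis using Dc by simp
    next
      case False
      with eq have "blinfun_apply T c \<bullet> c + blinfun_apply S c \<bullet> c = 0" by simp
      hence "blinfun_apply T c \<bullet> c = 0" "blinfun_apply S c \<bullet> c = 0"
        using Tpos[of c] Spos[of c] by linarith+
      hence "blinfun_apply T c = 0" "blinfun_apply S c = 0"
        using psd_zero[OF linT Tsym Tpos] psd_zero[OF linS Ssym Spos] by auto
      then show ?thesis by (simp add: D_def)
    qed
  qed
  have "D x = 0" for x
  proof (rule onb_ext[OF C(1)])
    fix c assume "c \<in> C"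
    then show "D x \<bullet> c = 0 \<bullet> c" by (simp add: Dsym Dc0)
  qed
  then show ?thesis by (intro blinfun_eqI) (simp add: D_def)
qed

lemma op_sqrt_eq:
  fixes S :: "'a::euclidean_space \<Rightarrow>\<^sub>L 'a"
  assumes "badj S = S" "nonneg_op S" "S o\<^sub>L S = K"
  shows "op_sqrt K = S"
  unfolding op_sqrt_def
  by (rule the_equality) (use assms sqrt_unique in blast)+



lemma Phi_apply:
  "blinfun_apply (Phi_op phi u) = (\<lambda>v. \<Sum>i\<in>UNIV. blinfun_apply (phi (u i)) (v $ i))"
proof -
  have "bounded_linear (\<lambda>v. \<Sum>i\<in>UNIV. blinfun_apply (phi (u i)) (v $ i))"
    by (intro bounded_linear_sum bounded_linear_compose[OF blinfun.bounded_linear_right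
          bounded_linear_vec_nth])
  then show ?thesis unfolding Phi_op_def by (simp add: bounded_linear_Blinfun_apply)
qed

lemma Phi_single:
  "blinfun_apply (Phi_op phi u) (\<chi> j. if j = i then v else 0) = blinfun_apply (phi (u i)) v"
proof -
  have "(\<Sum>j\<in>UNIV. blinfun_apply (phi (u j)) ((\<chi> j. if j = i then v else 0) $ j))
      = (\<Sum>j\<in>UNIV. if j = i then blinfun_apply (phi (u j)) v else 0)"
    by (intro sum.cong refl) simp
  also have "\<dots> = blinfun_apply (phi (u i)) v" by simp
  finally show ?thesis by (simp add: Phi_apply)
qed

lemma fc_apply_Blinfun: "blinfun_apply (Blinfun (fc B g)) = fc B g"
  by (simp add: bounded_linear_Blinfun_apply fc_bl)

theorem corollary1:
  fixes phi :: "'u::euclidean_space \<Rightarrow> ('u \<Rightarrow>\<^sub>L 'w::{real_inner, complete_space})"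
    and u y :: "'n::finite \<Rightarrow> 'u"
    and \<gamma> :: real
  assumes "\<gamma> > 0"
    and "\<exists>Q. is_nonneg_minimizer (objQ phi u y \<gamma>) Q"
  shows "(\<exists>M. is_nonneg_minimizer (objM phi u y \<gamma>) M)
    \<and> (\<forall>M. is_nonneg_minimizer (objM phi u y \<gamma>) M \<longrightarrow>
         is_nonneg_minimizer (objQ phi u y \<gamma>) (Phi_op phi u o\<^sub>L M o\<^sub>L badj (Phi_op phi u))
         \<and> (\<forall>x. blinfun_apply (badj (phi x) o\<^sub>L (Phi_op phi u o\<^sub>L M o\<^sub>L badj (Phi_op phi u)) o\<^sub>L phi x) x
                = blinfun_apply (badj (kappa_op phi u x) o\<^sub>L M o\<^sub>L kappa_op phi u x) x))"
proof -
  define \<Phi> where "\<Phi> = Phi_op phi u"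
  define Pa where "Pa = blinfun_apply \<Phi>"
  define Pt where "Pt = blinfun_apply (badj \<Phi>)"
  have adj1: "Pa x \<bullet> w = x \<bullet> Pt w" for x w unfolding Pa_def Pt_def by (rule badj_inner)
  have adj2: "w \<bullet> Pa x = Pt w \<bullet> x" for x w unfolding Pa_def Pt_def by (rule badj_inner')
  have Pa_lin: "linear Pa" unfolding Pa_def by (simp add: blinfun.bounded_linear_right bounded_linear.linear)
  have Pa_diff: "Pa (a - b) = Pa a - Pa b" for a b unfolding Pa_def by (simp add: blinfun.diff_right)
  define Kf where "Kf x = Pt (Pa x)" for x
  have Gram_apply: "blinfun_apply (Gram_op phi u) = Kf"
    by (rule ext) (simp add: Gram_op_def Kf_def Pa_def Pt_def \<Phi>_def)
  have Klin: "linear Kf" unfolding Gram_apply[symmetric]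
    by (rule bounded_linear.linear[OF blinfun.bounded_linear_right])
  have Ksym: "Kf x \<bullet> z = x \<bullet> Kf z" for x z
    unfolding Kf_def by (metis adj1 adj2 inner_commute)
  have Kpa: "Kf x \<bullet> x = Pa x \<bullet> Pa x" for x unfolding Kf_def by (metis adj2 inner_commute)
  obtain B where onbB: "onb B" and Beig: "\<And>b. b \<in> B \<Longrightarrow> Kf b = (Kf b \<bullet> b) *\<^sub>R b"
    using onb_spectral[OF Klin] Ksym by blast
  define lam where "lam b = Kf b \<bullet> b" for b
  have lam_nn: "lam b \<ge> 0" for b unfolding lam_def Kpa by simp
  have Kfc: "Kf x = fc B lam x" for x
    unfolding lam_def by (rule fc_linear_eq[OF onbB Klin Ksym Beig])
  note fcc = fc_comp[OF onbB]
  define S0 where "S0 = Blinfun (fc B (\<lambda>b. sqrt (lam b)))"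
  have S0_apply: "blinfun_apply S0 = fc B (\<lambda>b. sqrt (lam b))" unfolding S0_def by (rule fc_apply_Blinfun)
  have "op_sqrt (Gram_op phi u) = S0"
  proof (rule op_sqrt_eq)
    show "badj S0 = S0" by (rule badj_eqI) (simp add: S0_apply fc_sym)
    show "nonneg_op S0" unfolding nonneg_op_def S0_apply by (auto intro!: fc_nonneg simp: lam_nn)
    show "S0 o\<^sub>L S0 = Gram_op phi u"
      by (rule blinfun_eqI) (simp add: S0_apply Gram_apply Kfc fcc lam_nn)
  qed
  then have sqrtK: "op_sqrt (Gram_op phi u) = S0" .
  have F1: "Pa (fc B g x) = Pa (fc B h x)" if gh: "\<And>b. b \<in> B \<Longrightarrow> lam b \<noteq> 0 \<Longrightarrow> g b = h b" for g h x
  proof -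
    define d where "d = fc B (\<lambda>b. g b - h b) x"
    have "Kf d = fc B (\<lambda>b. lam b * (g b - h b)) x" unfolding d_def Kfc fcc ..
    also have "\<dots> = fc B (\<lambda>b. 0) x" by (rule fc_cong[OF onbB]) (use gh in auto)
    also have "\<dots> = 0" by (rule fc_zero[OF onbB])
    finally have "Pa d \<bullet> Pa d = 0" using Kpa[of d] by simp
    hence "Pa d = 0" by simp
    moreover have "d = fc B g x - fc B h x" unfolding d_def by (simp add: fc_diff[OF onbB])
    ultimately show ?thesis by (simp add: Pa_diff)
  qed
  have F2: "fc B g (Pt w) = Pt w" if g: "\<And>b. b \<in> B \<Longrightarrow> lam b \<noteq> 0 \<Longrightarrow> g b = 1" for g w
  proof -
    define d where "d = fc B (\<lambda>b. 1 - g b) (Pt w)"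
    have d_eq: "d = Pt w - fc B g (Pt w)" unfolding d_def
      using fc_diff[OF onbB, where g="\<lambda>b. 1" and h=g and x="Pt w"] by (simp add: fc_one[OF onbB])
    have "d \<bullet> d = Pt w \<bullet> fc B (\<lambda>b. 1 - g b) d" unfolding d_def by (simp add: fc_sym)
    also have "\<dots> = w \<bullet> Pa (fc B (\<lambda>b. 1 - g b) d)" by (simp add: adj2)
    also have "Pa (fc B (\<lambda>b. 1 - g b) d) = Pa (fc B (\<lambda>b. (1 - g b) * (1 - g b)) (Pt w))"
      unfolding d_def fcc ..
    also have "\<dots> = Pa (fc B (\<lambda>b. 0) (Pt w))" by (rule F1) (simp add: g)
    also have "\<dots> = 0" by (simp add: fc_zero[OF onbB] Pa_def)
    finally have "d = 0" by simp
    then show ?thesis using d_eq by simp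
  qed
  define Kp where "Kp = fc B (\<lambda>b. inverse (lam b))"
  define Sp where "Sp = fc B (\<lambda>b. inverse (sqrt (lam b)))"
  define P where "P w = Pa (Kp (Pt w))" for w
  have P_sym: "P a \<bullet> b = a \<bullet> P b" for a b
    unfolding P_def Kp_def by (simp add: adj1 adj2 fc_sym)
  have P_idem: "P (P a) \<bullet> b = P a \<bullet> b" for a b
  proof -
    have "P (P a) = Pa (Kp (Kf (Kp (Pt a))))" unfolding P_def Kf_def ..
    also have "\<dots> = Pa (Kp (Pt a))" unfolding Kp_def Kfc fcc
      by (rule arg_cong[where f=Pa], rule fc_cong[OF onbB]) (simp add: field_simps)
    finally show ?thesis unfolding P_def by simp
  qed
  have P_norm: "norm (P w) \<le> norm w" for w
  proof -
    have "norm (P w) ^ 2 = P w \<bullet> P w" by (simp add: power2_norm_eq_inner)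
    also have "\<dots> = w \<bullet> P w" using P_sym[of w "P w"] P_idem[of w w] P_sym[of "P w" w]
      by (metis inner_commute)
    also have "\<dots> \<le> norm w * norm (P w)" by (rule abs_le_D1[OF Cauchy_Schwarz_ineq2])
    finally have "norm (P w) * norm (P w) \<le> norm w * norm (P w)" by (simp add: power2_eq_square)
    then show ?thesis by (cases "norm (P w) = 0") (auto simp: mult_le_cancel_right)
  qed
  have P_Phi: "P (Pa x) = Pa x" for x
  proof -
    have "P (Pa x) = Pa (fc B (\<lambda>b. inverse (lam b) * lam b) x)" unfolding P_def Kp_def
      using Kfc[of x] by (simp add: Kf_def fcc)
    also have "\<dots> = Pa (fc B (\<lambda>b. 1) x)" by (rule F1) simp
    finally show ?thesis by (simp add: fc_one[OF onbB])
  qed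
  have S0_norm: "norm (Pa z) = norm (blinfun_apply S0 z)" for z
  proof -
    have "norm (Pa z) ^ 2 = Pa z \<bullet> Pa z" by (simp add: power2_norm_eq_inner)
    also have "\<dots> = z \<bullet> fc B lam z" by (simp add: Kpa[symmetric] Kfc fc_sym)
    also have "\<dots> = blinfun_apply S0 z \<bullet> blinfun_apply S0 z"
      by (simp add: S0_apply fc_sym fcc lam_nn)
    also have "\<dots> = norm (blinfun_apply S0 z) ^ 2" by (simp add: power2_norm_eq_inner)
    finally show ?thesis by simp
  qed
  have normeq: "norm (\<Phi> o\<^sub>L M o\<^sub>L badj \<Phi>) = norm (S0 o\<^sub>L M o\<^sub>L S0)" for M
  proof (rule antisym)
    show "norm (\<Phi> o\<^sub>L M o\<^sub>L badj \<Phi>) \<le> norm (S0 o\<^sub>L M o\<^sub>L S0)"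
    proof (rule norm_blinfun_bound)
      fix w
      define yy where "yy = Sp (Pt w)"
      have Syy: "blinfun_apply S0 yy = Pt w" unfolding yy_def S0_apply Sp_def fcc
        by (rule F2) (simp add: lam_nn)
      have "norm yy ^ 2 = yy \<bullet> yy" by (simp add: power2_norm_eq_inner)
      also have "\<dots> = Pt w \<bullet> fc B (\<lambda>b. inverse (sqrt (lam b)) * inverse (sqrt (lam b))) (Pt w)"
        unfolding yy_def Sp_def by (simp add: fc_sym fcc)
      also have "\<dots> = Pt w \<bullet> Kp (Pt w)"
      proof -
        have "fc B (\<lambda>b. inverse (sqrt (lam b)) * inverse (sqrt (lam b))) (Pt w) = Kp (Pt w)"
          unfolding Kp_def by (rule fc_cong[OF onbB])
            (metis abs_of_nonneg inverse_mult_distrib lam_nn real_sqrt_mult_self)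
        then show ?thesis by simp
      qed
      also have "\<dots> = w \<bullet> P w" unfolding P_def by (simp add: adj2)
      also have "\<dots> \<le> norm w * norm (P w)" by (rule abs_le_D1[OF Cauchy_Schwarz_ineq2])
      also have "\<dots> \<le> norm w * norm w" by (simp add: P_norm mult_left_mono)
      finally have ny: "norm yy \<le> norm w"
        by (metis power2_eq_square abs_norm_cancel power2_le_imp_le norm_ge_zero)
      have "norm (blinfun_apply (\<Phi> o\<^sub>L M o\<^sub>L badj \<Phi>) w) = norm (Pa (blinfun_apply M (blinfun_apply S0 yy)))"
        by (simp add: Pa_def Pt_def Syy)
      also have "\<dots> = norm (blinfun_apply (S0 o\<^sub>L M o\<^sub>L S0) yy)" by (simp add: S0_norm)
      also have "\<dots> \<le> norm (S0 o\<^sub>L M o\<^sub>L S0) * norm yy" by (rule norm_blinfun)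
      also have "\<dots> \<le> norm (S0 o\<^sub>L M o\<^sub>L S0) * norm w" by (simp add: ny mult_left_mono)
      finally show "norm (blinfun_apply (\<Phi> o\<^sub>L M o\<^sub>L badj \<Phi>) w) \<le> norm (S0 o\<^sub>L M o\<^sub>L S0) * norm w" .
    qed simp
  next
    show "norm (S0 o\<^sub>L M o\<^sub>L S0) \<le> norm (\<Phi> o\<^sub>L M o\<^sub>L badj \<Phi>)"
    proof (rule norm_blinfun_bound)
      fix x
      define w where "w = Pa (Sp x)"
      have Ptw: "Pt w = blinfun_apply S0 x"
      proof -
        have "Pt w = fc B (\<lambda>b. lam b * inverse (sqrt (lam b))) x"
          unfolding w_def using Kfc[of "Sp x"] by (simp add: Kf_def Sp_def fcc)
        also have "\<dots> = fc B (\<lambda>b. sqrt (lam b)) x"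
          by (rule fc_cong[OF onbB]) (metis divide_inverse lam_nn real_div_sqrt)
        finally show ?thesis by (simp add: S0_apply)
      qed
      have "norm w = norm (fc B (\<lambda>b. sqrt (lam b) * inverse (sqrt (lam b))) x)"
        unfolding w_def S0_norm by (simp add: S0_apply Sp_def fcc)
      also have "\<dots> \<le> norm x"
      proof (rule fc_norm_le[OF onbB])
        fix b
        show "sqrt (lam b) * inverse (sqrt (lam b)) * (sqrt (lam b) * inverse (sqrt (lam b))) =
          sqrt (lam b) * inverse (sqrt (lam b))"
          by (cases "lam b = 0") simp_all
      qed
      finally have nw: "norm w \<le> norm x" .
      have "norm (blinfun_apply (S0 o\<^sub>L M o\<^sub>L S0) x) = norm (Pa (blinfun_apply M (Pt w)))"
        by (simp add: Ptw S0_norm)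
      also have "\<dots> = norm (blinfun_apply (\<Phi> o\<^sub>L M o\<^sub>L badj \<Phi>) w)" by (simp add: Pa_def Pt_def)
      also have "\<dots> \<le> norm (\<Phi> o\<^sub>L M o\<^sub>L badj \<Phi>) * norm w" by (rule norm_blinfun)
      also have "\<dots> \<le> norm (\<Phi> o\<^sub>L M o\<^sub>L badj \<Phi>) * norm x" by (simp add: nw mult_left_mono)
      finally show "norm (blinfun_apply (S0 o\<^sub>L M o\<^sub>L S0) x) \<le> norm (\<Phi> o\<^sub>L M o\<^sub>L badj \<Phi>) * norm x" .
    qed simp
  qed
  have kadj: "badj (kappa_op phi u x) = badj (phi x) o\<^sub>L \<Phi>" for x
  proof (rule badj_eqI)
    fix v z
    have "blinfun_apply (kappa_op phi u x) v = Pt (blinfun_apply (phi x) v)"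
      by (simp add: kappa_op_def Pt_def \<Phi>_def)
    then have "blinfun_apply (kappa_op phi u x) v \<bullet> z = blinfun_apply (phi x) v \<bullet> Pa z"
      by (simp add: adj2)
    also have "\<dots> = v \<bullet> blinfun_apply (badj (phi x)) (Pa z)" by (rule badj_inner)
    finally show "blinfun_apply (kappa_op phi u x) v \<bullet> z = v \<bullet> blinfun_apply (badj (phi x) o\<^sub>L \<Phi>) z"
      by (simp add: Pa_def)
  qed
  have ident: "blinfun_apply (badj (phi x) o\<^sub>L (\<Phi> o\<^sub>L M o\<^sub>L badj \<Phi>) o\<^sub>L phi x) x
      = blinfun_apply (badj (kappa_op phi u x) o\<^sub>L M o\<^sub>L kappa_op phi u x) x" for x M
    by (simp add: kadj) (simp add: kappa_op_def \<Phi>_def)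
  have nonnegPhi: "nonneg_op (\<Phi> o\<^sub>L M o\<^sub>L badj \<Phi>)" if "nonneg_op M" for M
    unfolding nonneg_op_def
  proof
    fix w
    have "blinfun_apply (\<Phi> o\<^sub>L M o\<^sub>L badj \<Phi>) w \<bullet> w = blinfun_apply M (Pt w) \<bullet> Pt w"
      by (simp add: adj1 flip: Pa_def Pt_def)
    also have "\<dots> \<ge> 0" using that by (simp add: nonneg_op_def)
    finally show "0 \<le> blinfun_apply (\<Phi> o\<^sub>L M o\<^sub>L badj \<Phi>) w \<bullet> w" .
  qed
  have objeq: "objQ phi u y \<gamma> (\<Phi> o\<^sub>L M o\<^sub>L badj \<Phi>) = objM phi u y \<gamma> M" for M
    unfolding objQ_def objM_def sqrtK normeq ident by (simp add: \<Phi>_def)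
  have reduce: "\<exists>M. nonneg_op M \<and> objM phi u y \<gamma> M \<le> objQ phi u y \<gamma> Q" if Qnn: "nonneg_op Q" for Q
  proof -
    define Kb where "Kb = Blinfun Kp"
    have Kb_apply: "blinfun_apply Kb = Kp" unfolding Kb_def Kp_def by (rule fc_apply_Blinfun)
    define MQ where "MQ = Kb o\<^sub>L badj \<Phi> o\<^sub>L Q o\<^sub>L \<Phi> o\<^sub>L Kb"
    have MQnn: "nonneg_op MQ" unfolding nonneg_op_def
    proof
      fix z
      have "blinfun_apply MQ z \<bullet> z = Kp (Pt (blinfun_apply Q (Pa (Kp z)))) \<bullet> z"
        by (simp add: MQ_def Kb_apply flip: Pa_def Pt_def)
      also have "\<dots> = Pt (blinfun_apply Q (Pa (Kp z))) \<bullet> Kp z" unfolding Kp_def by (rule fc_sym)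
      also have "\<dots> = blinfun_apply Q (Pa (Kp z)) \<bullet> Pa (Kp z)" by (simp add: adj2)
      also have "\<dots> \<ge> 0" using Qnn by (simp add: nonneg_op_def)
      finally show "0 \<le> blinfun_apply MQ z \<bullet> z" .
    qed
    have MQapp: "blinfun_apply (\<Phi> o\<^sub>L MQ o\<^sub>L badj \<Phi>) w = P (blinfun_apply Q (P w))" for w
      by (simp add: MQ_def Kb_apply P_def flip: Pa_def Pt_def)
    have phiP: "P (blinfun_apply (phi (u i)) v) = blinfun_apply (phi (u i)) v" for i v
      using P_Phi[of "\<chi> j. if j = i then v else 0"] by (simp add: Pa_def \<Phi>_def Phi_single)
    have badjP: "blinfun_apply (badj (phi (u i))) (P a) = blinfun_apply (badj (phi (u i))) a" for i a
    proof -
      have "v \<bullet> blinfun_apply (badj (phi (u i))) (P a) = v \<bullet> blinfun_apply (badj (phi (u i))) a" for v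
      proof -
        have "v \<bullet> blinfun_apply (badj (phi (u i))) (P a) = blinfun_apply (phi (u i)) v \<bullet> P a"
          by (simp add: badj_inner)
        also have "\<dots> = P (blinfun_apply (phi (u i)) v) \<bullet> a" by (simp add: P_sym)
        also have "\<dots> = v \<bullet> blinfun_apply (badj (phi (u i))) a" by (simp add: phiP badj_inner)
        finally show ?thesis .
      qed
      then show ?thesis using vector_eq_ldot by blast
    qed
    have nQ: "norm (\<Phi> o\<^sub>L MQ o\<^sub>L badj \<Phi>) \<le> norm Q"
    proof (rule norm_blinfun_bound)
      fix w
      have "norm (blinfun_apply (\<Phi> o\<^sub>L MQ o\<^sub>L badj \<Phi>) w) \<le> norm (blinfun_apply Q (P w))"
        unfolding MQapp by (rule P_norm)
      also have "\<dots> \<le> norm Q * norm (P w)" by (rule norm_blinfun)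
      also have "\<dots> \<le> norm Q * norm w" by (simp add: P_norm mult_left_mono)
      finally show "norm (blinfun_apply (\<Phi> o\<^sub>L MQ o\<^sub>L badj \<Phi>) w) \<le> norm Q * norm w" .
    qed simp
    have "objQ phi u y \<gamma> (\<Phi> o\<^sub>L MQ o\<^sub>L badj \<Phi>) \<le> objQ phi u y \<gamma> Q"
    proof -
      have "(\<Sum>i\<in>UNIV. (norm (blinfun_apply (badj (phi (u i)) o\<^sub>L (\<Phi> o\<^sub>L MQ o\<^sub>L badj \<Phi>) o\<^sub>L phi (u i)) (u i) - y i))\<^sup>2)
          = (\<Sum>i\<in>UNIV. (norm (blinfun_apply (badj (phi (u i)) o\<^sub>L Q o\<^sub>L phi (u i)) (u i) - y i))\<^sup>2)"
      proof (intro sum.cong refl)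
        fix i
        have "blinfun_apply (badj (phi (u i)) o\<^sub>L (\<Phi> o\<^sub>L MQ o\<^sub>L badj \<Phi>) o\<^sub>L phi (u i)) (u i)
            = blinfun_apply (badj (phi (u i))) (blinfun_apply (\<Phi> o\<^sub>L MQ o\<^sub>L badj \<Phi>) (blinfun_apply (phi (u i)) (u i)))"
          by (simp only: blinfun_apply_blinfun_compose)
        also have "\<dots> = blinfun_apply (badj (phi (u i))) (blinfun_apply Q (blinfun_apply (phi (u i)) (u i)))"
          by (simp only: MQapp phiP badjP)
        also have "\<dots> = blinfun_apply (badj (phi (u i)) o\<^sub>L Q o\<^sub>L phi (u i)) (u i)"
          by (simp only: blinfun_apply_blinfun_compose)
        finally show "(norm (blinfun_apply (badj (phi (u i)) o\<^sub>L (\<Phi> o\<^sub>L MQ o\<^sub>L badj \<Phi>) o\<^sub>L phi (u i)) (u i) - y i))\<^sup>2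
          = (norm (blinfun_apply (badj (phi (u i)) o\<^sub>L Q o\<^sub>L phi (u i)) (u i) - y i))\<^sup>2" by simp
      qed
      moreover have "\<gamma> * norm (\<Phi> o\<^sub>L MQ o\<^sub>L badj \<Phi>) \<le> \<gamma> * norm Q"
        using nQ assms(1) by (simp add: mult_left_mono)
      ultimately show ?thesis unfolding objQ_def by linarith
    qed
    then show ?thesis using MQnn objeq[of MQ] by auto
  qed
  obtain Q0 where Q0: "is_nonneg_minimizer (objQ phi u y \<gamma>) Q0" using assms(2) by blast
  obtain M0 where M0: "nonneg_op M0" "objM phi u y \<gamma> M0 \<le> objQ phi u y \<gamma> Q0"
    using reduce Q0 unfolding is_nonneg_minimizer_def by blast
  have part1: "is_nonneg_minimizer (objM phi u y \<gamma>) M0"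
    unfolding is_nonneg_minimizer_def
  proof (intro conjI allI impI)
    show "nonneg_op M0" by fact
    fix M' :: "('u, 'n) vec \<Rightarrow>\<^sub>L ('u, 'n) vec" assume "nonneg_op M'"
    then have "objQ phi u y \<gamma> Q0 \<le> objQ phi u y \<gamma> (\<Phi> o\<^sub>L M' o\<^sub>L badj \<Phi>)"
      using Q0 nonnegPhi unfolding is_nonneg_minimizer_def by blast
    then show "objM phi u y \<gamma> M0 \<le> objM phi u y \<gamma> M'" using M0(2) objeq[of M'] by linarith
  qed
  have part2: "is_nonneg_minimizer (objQ phi u y \<gamma>) (\<Phi> o\<^sub>L M o\<^sub>L badj \<Phi>)"
    if M: "is_nonneg_minimizer (objM phi u y \<gamma>) M" for M
    unfolding is_nonneg_minimizer_def
  proof (intro conjI allI impI)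
    show "nonneg_op (\<Phi> o\<^sub>L M o\<^sub>L badj \<Phi>)" using M nonnegPhi unfolding is_nonneg_minimizer_def by blast
    fix Q :: "'w \<Rightarrow>\<^sub>L 'w" assume "nonneg_op Q"
    then obtain MQ where MQ: "nonneg_op MQ" "objM phi u y \<gamma> MQ \<le> objQ phi u y \<gamma> Q"
      using reduce by blast
    have "objM phi u y \<gamma> M \<le> objM phi u y \<gamma> MQ" using M MQ(1) unfolding is_nonneg_minimizer_def by blast
    then show "objQ phi u y \<gamma> (\<Phi> o\<^sub>L M o\<^sub>L badj \<Phi>) \<le> objQ phi u y \<gamma> Q" using MQ(2) objeq[of M] by linarith
  qed
  show ?thesis using part1 part2 ident unfolding \<Phi>_def by blast
qed


end
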